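(* Let $G$ be a locally compact group with left Haar measure $m$. Then either $I(G)=1$ or $I(G)=\infty$.
   Context: $I(G)=\sup_{K\in \mathcal K}\inf_{A\in \mathcal K_p} m(KA)/m(A)$, where $\mathcal K$ is the collection of nonempty compact subsets of $G$, $\mathcal K_p$ the collection of compact subsets of positive left Haar measure, and $KA=\{ka:k\in K,a\in A\}$. *)

theory Defs
  imports "HOL-Analysis.Analysis"
begin

text \<open>Groups are written additively (class group_add, not necessarily commutative),
  so the product KA of the paper is the set {k + a}.\<close>

definition set_prod :: "'a::plus set \<Rightarrow> 'a set \<Rightarrow> 'a set" where
  "set_prod K A = {k + a | k a. k \<in> K \<and> a \<in> A}"

definition locally_compact_group :: "'a::{t2_space, group_add} itself \<Rightarrow> bool" where
  "locally_compact_group _ \<longleftrightarrow>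
     continuous_on UNIV (\<lambda>p::'a \<times> 'a. fst p + snd p) \<and>
     continuous_on UNIV (\<lambda>x::'a. - x) \<and>
     (\<forall>x::'a. \<exists>U K. open U \<and> compact K \<and> x \<in> U \<and> U \<subseteq> K)"

definition left_haar_measure :: "'a::{topological_space, group_add} measure \<Rightarrow> bool" where
  "left_haar_measure m \<longleftrightarrow>
     sets m = sets borel \<and>
     (\<forall>a S. S \<in> sets borel \<longrightarrow> emeasure m ((\<lambda>x. a + x) ` S) = emeasure m S) \<and>
     (\<forall>K. compact K \<longrightarrow> emeasure m K < \<infinity>) \<and>
     (\<forall>U. open U \<and> U \<noteq> {} \<longrightarrow> emeasure m U > 0) \<and>
     (\<forall>S \<in> sets borel. emeasure m S = (INF U \<in> {U. open U \<and> S \<subseteq> U}. emeasure m U)) \<and>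
     (\<forall>U. open U \<longrightarrow> emeasure m U = (SUP K \<in> {K. compact K \<and> K \<subseteq> U}. emeasure m K))"

definition I_const :: "'a::{topological_space, group_add} measure \<Rightarrow> ereal" where
  "I_const m = (SUP K \<in> {K. compact K \<and> K \<noteq> {}}.
                 INF A \<in> {A. compact A \<and> emeasure m A > 0}.
                   ereal (measure m (set_prod K A) / measure m A))"

end

theory Submission
  imports Defs
begin

lemma sp_image: "set_prod K A = (\<lambda>p. fst p + snd p) ` (K \<times> A)"
  unfolding set_prod_def by force

lemma sp_compact:
  fixes K A :: "'a::{t2_space, group_add} set"
  assumes cont: "continuous_on UNIV (\<lambda>p::'a \<times> 'a. fst p + snd p)"
    and "compact K" "compact A"
  shows "compact (set_prod K A)"
  unfolding sp_image
  by (rule compact_continuous_image[OF continuous_on_subset[OF cont] compact_Times[OF assms(2,3)]]) simp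

lemma sp_assoc: "set_prod (set_prod X K) (A::'a::group_add set) = set_prod X (set_prod K A)"
  unfolding set_prod_def apply auto by (metis add.assoc)+

lemma haar_sets: "left_haar_measure m \<Longrightarrow> sets m = sets borel"
  unfolding left_haar_measure_def by (rule conjunct1)

lemma haar_inv: "left_haar_measure m \<Longrightarrow> S \<in> sets borel \<Longrightarrow> emeasure m ((\<lambda>x. a + x) ` S) = emeasure m S"
  unfolding left_haar_measure_def by (drule conjunct1[OF conjunct2]) (erule allE, erule allE, erule mp)

lemma haar_fin: "left_haar_measure m \<Longrightarrow> compact K \<Longrightarrow> emeasure m K < \<infinity>"
  unfolding left_haar_measure_def by (drule conjunct1[OF conjunct2[OF conjunct2]]) (erule allE, erule mp)

lemma compact_sets:
  fixes A :: "'a::{t2_space, group_add} set"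
  assumes "left_haar_measure m" "compact A"
  shows "A \<in> sets m"
  using haar_sets[OF assms(1)] assms(2)
  by (simp add: borel_closed compact_imp_closed)

lemma sp_mono_emeasure:
  fixes K A :: "'a::{t2_space, group_add} set"
  assumes h: "left_haar_measure m"
    and cont: "continuous_on UNIV (\<lambda>p::'a \<times> 'a. fst p + snd p)"
    and "compact K" "K \<noteq> {}" "compact A"
  shows "emeasure m A \<le> emeasure m (set_prod K A)"
proof -
  obtain k where k: "k \<in> K" using assms by blast
  have sub: "(\<lambda>x. k + x) ` A \<subseteq> set_prod K A" using k unfolding set_prod_def by auto
  have Ab: "A \<in> sets borel" using assms by (simp add: borel_closed compact_imp_closed)
  have "emeasure m A = emeasure m ((\<lambda>x. k + x) ` A)"
    using haar_inv[OF h Ab] by simp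
  also have "\<dots> \<le> emeasure m (set_prod K A)"
    by (rule emeasure_mono[OF sub compact_sets[OF h sp_compact[OF cont assms(3,5)]]])
  finally show ?thesis .
qed

lemma sp_mono_measure:
  fixes K A :: "'a::{t2_space, group_add} set"
  assumes h: "left_haar_measure m"
    and cont: "continuous_on UNIV (\<lambda>p::'a \<times> 'a. fst p + snd p)"
    and "compact K" "K \<noteq> {}" "compact A"
  shows "measure m A \<le> measure m (set_prod K A)"
proof -
  have fin: "emeasure m (set_prod K A) < \<infinity>"
    by (rule haar_fin[OF h sp_compact[OF cont assms(3,5)]])
  show ?thesis unfolding measure_def
    using enn2real_mono[OF sp_mono_emeasure[OF assms]] fin by (simp add: top_ennreal_def)
qed

theorem lemma3p1:
  fixes m :: "'a::{t2_space, group_add} measure"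
  assumes "locally_compact_group TYPE('a)"
    and "left_haar_measure m"
  shows "I_const m = 1 \<or> I_const m = \<infinity>"
proof -
  note h = assms(2)
  have cont: "continuous_on UNIV (\<lambda>p::'a \<times> 'a. fst p + snd p)"
    using assms(1) unfolding locally_compact_group_def by blast
  define S where "S = {A::'a set. compact A \<and> emeasure m A > 0}"
  define F where "F = (\<lambda>K. INF A \<in> S. ereal (measure m (set_prod K A) / measure m A))"
  have I: "I_const m = (SUP K \<in> {K. compact K \<and> K \<noteq> {}}. F K)"
    unfolding I_const_def F_def S_def by simp
  have posm: "measure m A > 0" if "A \<in> S" for A
  proof -
    have "emeasure m A < \<infinity>" using haar_fin[OF h] that unfolding S_def by blast
    moreover have "emeasure m A > 0" using that unfolding S_def by blast
    ultimately show ?thesis unfolding measure_def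
      by (simp add: enn2real_positive_iff)
  qed
  have F1: "1 \<le> F K" if "compact K" "K \<noteq> {}" for K
    unfolding F_def
  proof (rule INF_greatest)
    fix A assume A: "A \<in> S"
    have "measure m A \<le> measure m (set_prod K A)"
      using sp_mono_measure[OF h cont that] A unfolding S_def by blast
    then show "1 \<le> ereal (measure m (set_prod K A) / measure m A)"
      using posm[OF A] by simp
  qed
  have Ige: "1 \<le> I_const m"
    unfolding I
  proof (rule SUP_upper2[of "{0}"])
    show "{0} \<in> {K. compact K \<and> K \<noteq> {}}" by simp
    show "1 \<le> F {0}" by (rule F1) simp_all
  qed
  show ?thesis
  proof (cases "I_const m \<le> 1")
    case True then show ?thesis using Ige by simp
  next
    case False
    then have "1 < (SUP K \<in> {K. compact K \<and> K \<noteq> {}}. F K)" unfolding I by simp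
    then obtain K where K: "compact K" "K \<noteq> {}" "1 < F K"
      by (auto simp: less_SUP_iff)
    obtain c' where c': "1 < ereal c'" "ereal c' < F K" using ereal_dense2[OF K(3)] by blast
    define c where "c = c'"
    have c1: "1 < c" using c' c_def by simp
    have cK: "c * measure m A \<le> measure m (set_prod K A)" if "A \<in> S" for A
    proof -
      have "F K \<le> ereal (measure m (set_prod K A) / measure m A)"
        unfolding F_def using that by (rule INF_lower)
      then have "ereal c < ereal (measure m (set_prod K A) / measure m A)"
        using c'(2) unfolding c_def by (rule order.strict_trans2[rotated])
      then have "c \<le> measure m (set_prod K A) / measure m A" by simp
      then show ?thesis using posm[OF that] by (simp add: pos_le_divide_eq)
    qed
    define Kn where "Kn = rec_nat {0} (\<lambda>_ X. set_prod X K)"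
    have Kn0: "Kn 0 = {0}" and KnS: "\<And>n. Kn (Suc n) = set_prod (Kn n) K"
      unfolding Kn_def by (rule old.nat.rec(1), rule old.nat.rec(2))
    have Knc: "compact (Kn n) \<and> Kn n \<noteq> {}" for n
    proof (induction n)
      case 0 then show ?case by (simp add: Kn0)
    next
      case (Suc n)
      obtain x where x: "x \<in> Kn n" using Suc by blast
      obtain k where k: "k \<in> K" using K by blast
      have "x + k \<in> set_prod (Kn n) K" using x k unfolding set_prod_def by blast
      moreover have "compact (set_prod (Kn n) K)" using sp_compact[OF cont, of "Kn n" K] Suc K by blast
      ultimately show ?case unfolding KnS by blast
    qed
    have grow: "c ^ n * measure m A \<le> measure m (set_prod (Kn n) A)" if "A \<in> S" for n A
      using that
    proof (induction n arbitrary: A)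
      case 0
      have "set_prod {0} A = A" unfolding set_prod_def by auto
      then show ?case by (simp add: Kn0)
    next
      case (Suc n)
      define B where "B = set_prod K A"
      have Bc: "compact B" unfolding B_def using sp_compact[OF cont K(1)] Suc.prems
        unfolding S_def by blast
      have "emeasure m A \<le> emeasure m B"
        unfolding B_def using sp_mono_emeasure[OF h cont K(1,2)] Suc.prems unfolding S_def by blast
      then have BS: "B \<in> S" using Bc Suc.prems unfolding S_def by auto
      have "c ^ Suc n * measure m A = c ^ n * (c * measure m A)" by simp
      also have "\<dots> \<le> c ^ n * measure m B"
        using cK[OF Suc.prems] c1 unfolding B_def by (intro mult_left_mono) auto
      also have "\<dots> \<le> measure m (set_prod (Kn n) B)" by (rule Suc.IH[OF BS])
      also have "set_prod (Kn n) B = set_prod (Kn (Suc n)) A"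
        unfolding B_def KnS sp_assoc ..
      finally show ?case .
    qed
    have big: "ereal (c ^ n) \<le> I_const m" for n
      unfolding I
    proof (rule SUP_upper2[of "Kn n"])
      show "Kn n \<in> {K. compact K \<and> K \<noteq> {}}" using Knc by blast
      show "ereal (c ^ n) \<le> F (Kn n)" unfolding F_def
      proof (rule INF_greatest)
        fix A assume A: "A \<in> S"
        have "c ^ n \<le> measure m (set_prod (Kn n) A) / measure m A"
          using grow[OF A] posm[OF A] by (simp add: pos_le_divide_eq)
        then show "ereal (c ^ n) \<le> ereal (measure m (set_prod (Kn n) A) / measure m A)" by simp
      qed
    qed
    have "I_const m = \<infinity>"
    proof (rule ccontr)
      assume ne: "I_const m \<noteq> \<infinity>"
      have "I_const m \<noteq> -\<infinity>" using Ige by auto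
      then obtain r where r: "I_const m = ereal r" using ne by (cases "I_const m") auto
      obtain n where "r < c ^ n" using real_arch_pow[OF c1] by blast
      then show False using big[of n] r by simp
    qed
    then show ?thesis by simp
  qed
qed

end
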